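(* Let $(x_i,v_i)_{i=1}^N$ be differentiable functions of $t$ (on some time interval) with values in $\mathbb{R}^3$, satisfying $\dot x_i=v_i$ for all $i\in\{1,\dots,N\}$. Assume that, for all $i,j\in\{1,\dots,N\}$ and all times considered, $$\|x_i\|=1,\quad \langle v_i,x_i\rangle=0,\quad \|v_i\|\le\mathcal{V}_{max},\quad x_i\neq-x_j.$$ Then there is a constant $C>0$, independent of $t$, such that $$\Big\|\frac{d}{dt}R(x_j,x_i)\Big\|\le C\mathcal{V}_{max}+\frac{C}{\|x_i+x_j\|}\mathcal{V}_{max}.$$
   Context: $\|\cdot\|$ is the Euclidean norm on vectors and the induced (spectral) norm on $3\times3$ matrices; $\mathcal{V}_{max}\ge0$ is a constant. For column vectors $x_1,x_2$ in the unit sphere with $x_1\ne-x_2$, $R(x_1,x_2)=I$ if $x_1=x_2$, and otherwise $$R(x_1,x_2)=\langle x_1,x_2\rangle I-x_1x_2^T+x_2x_1^T+(1-\langle x_1,x_2\rangle)\Big(\frac{x_1\times x_2}{\|x_1\times x_2\|}\Big)\Big(\frac{x_1\times x_2}{\|x_1\times x_2\|}\Big)^T.$$ *)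

theory Defs
  imports "HOL-Analysis.Analysis" "HOL-Analysis.Cross3"
begin

definition outer3 :: "real^3 \<Rightarrow> real^3 \<Rightarrow> real^3^3" where
  "outer3 u w = (\<chi> i j. u $ i * w $ j)"

definition mat_norm :: "real^3^3 \<Rightarrow> real" where
  "mat_norm A = onorm (\<lambda>y. A *v y)"

definition Rot :: "real^3 \<Rightarrow> real^3 \<Rightarrow> real^3^3" where
  "Rot x1 x2 =
    (if x1 = x2 then mat 1
     else (x1 \<bullet> x2) *\<^sub>R mat 1 - outer3 x1 x2 + outer3 x2 x1
          + (1 - x1 \<bullet> x2) *\<^sub>R
              outer3 ((1 / norm (cross3 x1 x2)) *\<^sub>R cross3 x1 x2)
                     ((1 / norm (cross3 x1 x2)) *\<^sub>R cross3 x1 x2))"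

end

theory Submission
  imports Defs
begin


lemma outer3_mv: "outer3 u w *v y = (w \<bullet> y) *\<^sub>R u"
  by (simp add: outer3_def matrix_vector_mult_def vec_eq_iff inner_vec_def sum_distrib_left algebra_simps)

lemma bilinear_outer3: "bilinear outer3"
  unfolding bilinear_def
  by (auto intro!: linearI simp: outer3_def vec_eq_iff algebra_simps)

lemma bb_outer3: "bounded_bilinear outer3"
  using bilinear_outer3 bilinear_conv_bounded_bilinear by blast

lemma bb_cross3: "bounded_bilinear cross3"
  using bilinear_cross bilinear_conv_bounded_bilinear by blast

lemma outer3_zero[simp]: "outer3 0 w = 0" "outer3 u 0 = 0"
  by (auto simp: outer3_def vec_eq_iff)

lemma outer3_scale: "outer3 (k *\<^sub>R u) (k *\<^sub>R u) = (k*k) *\<^sub>R outer3 u u"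
  by (auto simp: outer3_def vec_eq_iff)

lemma norm_cross_le: "norm (cross3 a b) \<le> norm a * norm b"
proof -
  have "(norm (cross3 a b))\<^sup>2 \<le> (norm a * norm b)\<^sup>2" using norm_cross_dot[of a b]
    by (metis le_add_same_cancel1 zero_le_power2)
  thus ?thesis by (simp add: power2_le_iff_abs_le)
qed

definition Hf :: "real^3 \<Rightarrow> real^3 \<Rightarrow> real^3^3" where
  "Hf x1 x2 = (x1 \<bullet> x2) *\<^sub>R mat 1 - outer3 x1 x2 + outer3 x2 x1
     + (2 / ((x1 + x2) \<bullet> (x1 + x2))) *\<^sub>R outer3 (cross3 x1 x2) (cross3 x1 x2)"

lemma Rot_eq:
  assumes n1: "norm x1 = 1" and n2: "norm x2 = 1" and na: "x1 \<noteq> - x2"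
  shows "Rot x1 x2 = Hf x1 x2"
proof (cases "x1 = x2")
  case True
  have "x1 \<bullet> x1 = 1" using n1 by (simp add: dot_square_norm)
  then show ?thesis using True by (simp add: Rot_def Hf_def)
next
  case False
  define c where "c = x1 \<bullet> x2"
  define w where "w = cross3 x1 x2"
  have ww: "(norm w)\<^sup>2 = 1 - c\<^sup>2" using norm_cross_dot[of x1 x2] n1 n2 unfolding w_def c_def by simp
  have d: "(x1 - x2) \<bullet> (x1 - x2) = 2 - 2*c" "(x1 + x2) \<bullet> (x1 + x2) = 2 + 2*c"
  proof -
    have a: "x1 \<bullet> x1 = 1" "x2 \<bullet> x2 = 1" using n1 n2 by (simp_all add: dot_square_norm)
    show "(x1 - x2) \<bullet> (x1 - x2) = 2 - 2*c" "(x1 + x2) \<bullet> (x1 + x2) = 2 + 2*c"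
      unfolding c_def inner_diff_left inner_diff_right inner_add_left inner_add_right a
      by (simp_all add: inner_commute)
  qed
  have "(x1 - x2) \<bullet> (x1 - x2) \<noteq> 0" using False by simp
  hence c1: "c \<noteq> 1" using d by simp
  have "(x1 + x2) \<bullet> (x1 + x2) \<noteq> 0" using na by (auto simp: add_eq_0_iff)
  hence c2: "1 + c \<noteq> 0" using d by simp
  have wn: "(norm w)\<^sup>2 \<noteq> 0" using ww c1 c2
    by (metis (no_types, opaque_lifting) add.commute diff_add_cancel eq_diff_eq mult_eq_0_iff power2_eq_square right_minus_eq square_diff_one_factored)
  have "(1 - c) * ((1 / norm w) * (1 / norm w)) = 2 / ((x1 + x2) \<bullet> (x1 + x2))"
    using wn c1 c2 d(2) ww by (simp add: field_simps power2_eq_square)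
  then show ?thesis using False
    unfolding Rot_def Hf_def outer3_scale c_def[symmetric] w_def[symmetric] by simp
qed

definition Dx :: "real^3 \<Rightarrow> real^3 \<Rightarrow> real^3 \<Rightarrow> real^3 \<Rightarrow> real^3^3" where
  "Dx x1 x2 v1 v2 = (x1 \<bullet> v2 + v1 \<bullet> x2) *\<^sub>R mat 1 - (outer3 x1 v2 + outer3 v1 x2)
     + (outer3 x2 v1 + outer3 v2 x1)
     + ((2 / ((x1 + x2) \<bullet> (x1 + x2))) *\<^sub>R
          (outer3 (cross3 x1 x2) (cross3 x1 v2 + cross3 v1 x2) + outer3 (cross3 x1 v2 + cross3 v1 x2) (cross3 x1 x2))
        + (- (2 * ((x1 + x2) \<bullet> (v1 + v2) + (v1 + v2) \<bullet> (x1 + x2))) / ((x1 + x2) \<bullet> (x1 + x2))\<^sup>2) *\<^sub>R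
          outer3 (cross3 x1 x2) (cross3 x1 x2))"

lemma Hf_deriv:
  assumes d1: "(f1 has_vector_derivative v1) (at t)" and d2: "(f2 has_vector_derivative v2) (at t)"
    and q0: "(f1 t + f2 t) \<bullet> (f1 t + f2 t) \<noteq> 0"
  shows "((\<lambda>s. Hf (f1 s) (f2 s)) has_vector_derivative Dx (f1 t) (f2 t) v1 v2) (at t)"
proof -
  have dc: "((\<lambda>s. f1 s \<bullet> f2 s) has_vector_derivative (f1 t \<bullet> v2 + v1 \<bullet> f2 t)) (at t)"
    by (rule bounded_bilinear.has_vector_derivative[OF bounded_bilinear_inner d1 d2])
  have dA: "((\<lambda>s. outer3 (f1 s) (f2 s)) has_vector_derivative (outer3 (f1 t) v2 + outer3 v1 (f2 t))) (at t)"
    by (rule bounded_bilinear.has_vector_derivative[OF bb_outer3 d1 d2])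
  have dB: "((\<lambda>s. outer3 (f2 s) (f1 s)) has_vector_derivative (outer3 (f2 t) v1 + outer3 v2 (f1 t))) (at t)"
    by (rule bounded_bilinear.has_vector_derivative[OF bb_outer3 d2 d1])
  have dw: "((\<lambda>s. cross3 (f1 s) (f2 s)) has_vector_derivative (cross3 (f1 t) v2 + cross3 v1 (f2 t))) (at t)"
    by (rule bounded_bilinear.has_vector_derivative[OF bb_cross3 d1 d2])
  have dO: "((\<lambda>s. outer3 (cross3 (f1 s) (f2 s)) (cross3 (f1 s) (f2 s))) has_vector_derivative
     (outer3 (cross3 (f1 t) (f2 t)) (cross3 (f1 t) v2 + cross3 v1 (f2 t)) + outer3 (cross3 (f1 t) v2 + cross3 v1 (f2 t)) (cross3 (f1 t) (f2 t)))) (at t)"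
    by (rule bounded_bilinear.has_vector_derivative[OF bb_outer3 dw dw])
  have ds: "((\<lambda>s. f1 s + f2 s) has_vector_derivative (v1 + v2)) (at t)"
    using d1 d2 by (rule has_vector_derivative_add)
  have dq: "((\<lambda>s. (f1 s + f2 s) \<bullet> (f1 s + f2 s)) has_vector_derivative
       ((f1 t + f2 t) \<bullet> (v1 + v2) + (v1 + v2) \<bullet> (f1 t + f2 t))) (at t)"
    by (rule bounded_bilinear.has_vector_derivative[OF bounded_bilinear_inner ds ds])
  have dq': "((\<lambda>s. (f1 s + f2 s) \<bullet> (f1 s + f2 s)) has_field_derivative
       ((f1 t + f2 t) \<bullet> (v1 + v2) + (v1 + v2) \<bullet> (f1 t + f2 t))) (at t)"
    using dq by (simp add: has_real_derivative_iff_has_vector_derivative)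
  have dk: "((\<lambda>s. 2 / ((f1 s + f2 s) \<bullet> (f1 s + f2 s))) has_field_derivative
       (- (2 * ((f1 t + f2 t) \<bullet> (v1 + v2) + (v1 + v2) \<bullet> (f1 t + f2 t))) / ((f1 t + f2 t) \<bullet> (f1 t + f2 t))\<^sup>2)) (at t)"
    using DERIV_divide[OF DERIV_const[of 2] dq' q0] by (simp add: power2_eq_square)
  have dc': "((\<lambda>s. (f1 s \<bullet> f2 s) *\<^sub>R (mat 1 :: real^3^3)) has_vector_derivative ((f1 t \<bullet> v2 + v1 \<bullet> f2 t) *\<^sub>R mat 1)) (at t)"
    using has_vector_derivative_scaleR[OF dc[unfolded has_real_derivative_iff_has_vector_derivative[symmetric]] has_vector_derivative_const[of "mat 1"]]
    by simp
  note dkO = has_vector_derivative_scaleR[OF dk dO]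
  show ?thesis unfolding Hf_def Dx_def
    by (intro has_vector_derivative_add has_vector_derivative_diff dc' dA dB dkO)
qed

lemma sc_le:
  fixes u z y :: "real^3"
  assumes "norm u \<le> A" "norm z \<le> B"
  shows "norm ((u \<bullet> y) *\<^sub>R z) \<le> A * B * norm y"
proof -
  have "norm ((u \<bullet> y) *\<^sub>R z) = \<bar>u \<bullet> y\<bar> * norm z" by simp
  also have "\<dots> \<le> (A * norm y) * B"
  proof (rule mult_mono)
    show "\<bar>u \<bullet> y\<bar> \<le> A * norm y"
      using Cauchy_Schwarz_ineq2[of u y] assms(1) mult_right_mono norm_ge_zero order_trans by blast
    show "0 \<le> A * norm y" using assms(1) norm_ge_zero[of u] norm_ge_zero[of y] by (meson order_trans zero_le_mult_iff)
  qed (use assms in auto)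
  finally show ?thesis by (simp add: mult_ac)
qed

lemma norm5:
  fixes A B C E F :: "'a::real_normed_vector"
  shows "norm (A - B + C + (E + F)) \<le> norm A + norm B + norm C + norm E + norm F"
  by (smt (verit) norm_triangle_ineq norm_triangle_ineq4)


lemma Dx_bound:
  assumes n1: "norm x1 = 1" and n2: "norm x2 = 1" and na: "x1 \<noteq> - x2"
    and b1: "norm v1 \<le> V" and b2: "norm v2 \<le> V"
  shows "mat_norm (Dx x1 x2 v1 v2) \<le> 16 * V + 16 / norm (x1 + x2) * V"
proof -
  define p where "p = norm (x1 + x2)"
  define w where "w = cross3 x1 x2"
  define w' where "w' = cross3 x1 v2 + cross3 v1 x2"
  define c where "c = x1 \<bullet> x2"
  define a where "a = x1 \<bullet> v2 + v1 \<bullet> x2"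
  define q' where "q' = (x1 + x2) \<bullet> (v1 + v2) + (v1 + v2) \<bullet> (x1 + x2)"
  have V0: "V \<ge> 0" using b1 norm_ge_zero order_trans by blast
  have p0: "p > 0" using na unfolding p_def by (auto simp: add_eq_0_iff)
  have q: "(x1 + x2) \<bullet> (x1 + x2) = p\<^sup>2" unfolding p_def by (simp add: dot_square_norm)
  have a1: "x1 \<bullet> x1 = 1" "x2 \<bullet> x2 = 1" using n1 n2 by (simp_all add: dot_square_norm)
  have pc: "p\<^sup>2 = 2 + 2 * c" unfolding q[symmetric] c_def inner_add_left inner_add_right a1
    by (simp add: inner_commute)
  have ww: "(norm w)\<^sup>2 = 1 - c\<^sup>2" using norm_cross_dot[of x1 x2] n1 n2 unfolding w_def c_def by simp
  have cabs: "\<bar>c\<bar> \<le> 1" unfolding c_def using Cauchy_Schwarz_ineq2[of x1 x2] n1 n2 by simp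
  have "(norm w)\<^sup>2 \<le> p\<^sup>2" unfolding ww pc using zero_le_power2[of "1+c"]
    by (simp add: power2_eq_square algebra_simps)
  hence wp: "norm w \<le> p" using p0 by (simp add: power2_le_iff_abs_le)
  have w'b: "norm w' \<le> 2 * V" unfolding w'_def
    using norm_triangle_ineq[of "cross3 x1 v2" "cross3 v1 x2"] norm_cross_le[of x1 v2] norm_cross_le[of v1 x2] n1 n2 b1 b2
    by simp
  have ab: "\<bar>a\<bar> \<le> 2 * V" unfolding a_def
    using Cauchy_Schwarz_ineq2[of x1 v2] Cauchy_Schwarz_ineq2[of v1 x2] n1 n2 b1 b2 by simp
  have "\<bar>(x1 + x2) \<bullet> (v1 + v2)\<bar> \<le> p * (2 * V)"
  proof -
    have "\<bar>(x1 + x2) \<bullet> (v1 + v2)\<bar> \<le> p * norm (v1 + v2)" unfolding p_def by (rule Cauchy_Schwarz_ineq2)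
    also have "\<dots> \<le> p * (2 * V)" using norm_triangle_ineq[of v1 v2] b1 b2 p0
      by (intro mult_left_mono) auto
    finally show ?thesis .
  qed
  hence q'b: "\<bar>q'\<bar> \<le> 4 * p * V" unfolding q'_def by (simp add: inner_commute)
  have Dv: "Dx x1 x2 v1 v2 *v y = a *\<^sub>R y - ((v2 \<bullet> y) *\<^sub>R x1 + (x2 \<bullet> y) *\<^sub>R v1)
      + ((v1 \<bullet> y) *\<^sub>R x2 + (x1 \<bullet> y) *\<^sub>R v2)
      + ((2 / p\<^sup>2) *\<^sub>R ((w' \<bullet> y) *\<^sub>R w + (w \<bullet> y) *\<^sub>R w')
         + (- (2 * q') / (p\<^sup>2)\<^sup>2) *\<^sub>R ((w \<bullet> y) *\<^sub>R w))" for y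
    unfolding Dx_def q w_def[symmetric] w'_def[symmetric] a_def[symmetric] q'_def[symmetric]
    by (simp add: matrix_vector_mult_add_rdistrib matrix_vector_mult_diff_rdistrib
        scaleR_matrix_vector_assoc[symmetric] outer3_mv)
  have "norm (Dx x1 x2 v1 v2 *v y) \<le> (6 * V + 16 / p * V) * norm y" for y
  proof -
    have t1: "norm (a *\<^sub>R y) \<le> 2 * V * norm y" using ab by (simp add: mult_right_mono)
    have t2: "norm ((v2 \<bullet> y) *\<^sub>R x1 + (x2 \<bullet> y) *\<^sub>R v1) \<le> 2 * V * norm y"
    proof -
      have "norm ((v2 \<bullet> y) *\<^sub>R x1) \<le> V * norm y"
        using Cauchy_Schwarz_ineq2[of v2 y] b2 n1 by (simp add: mult_right_mono order_trans)
      moreover have "norm ((x2 \<bullet> y) *\<^sub>R v1) \<le> V * norm y"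
        using sc_le[of x2 1 v1 V y] n2 b1
        by simp
      ultimately show ?thesis using norm_triangle_ineq[of "(v2 \<bullet> y) *\<^sub>R x1" "(x2 \<bullet> y) *\<^sub>R v1"] by simp
    qed
    have t3: "norm ((v1 \<bullet> y) *\<^sub>R x2 + (x1 \<bullet> y) *\<^sub>R v2) \<le> 2 * V * norm y"
    proof -
      have "norm ((v1 \<bullet> y) *\<^sub>R x2) \<le> V * norm y"
        using Cauchy_Schwarz_ineq2[of v1 y] b1 n2 by (simp add: mult_right_mono order_trans)
      moreover have "norm ((x1 \<bullet> y) *\<^sub>R v2) \<le> V * norm y"
        using sc_le[of x1 1 v2 V y] n1 b2
        by simp
      ultimately show ?thesis using norm_triangle_ineq[of "(v1 \<bullet> y) *\<^sub>R x2" "(x1 \<bullet> y) *\<^sub>R v2"] by simp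
    qed
    have t4: "norm ((2 / p\<^sup>2) *\<^sub>R ((w' \<bullet> y) *\<^sub>R w + (w \<bullet> y) *\<^sub>R w')) \<le> 8 / p * V * norm y"
    proof -
      have e1: "norm ((w' \<bullet> y) *\<^sub>R w) \<le> 2 * V * norm y * p"
        using sc_le[OF w'b wp, of y]
        by (simp add: mult_ac)
      have e2: "norm ((w \<bullet> y) *\<^sub>R w') \<le> 2 * V * norm y * p"
        using sc_le[OF wp w'b, of y]
        by (simp add: mult_ac)
      have "norm ((w' \<bullet> y) *\<^sub>R w + (w \<bullet> y) *\<^sub>R w') \<le> 4 * V * norm y * p"
        using e1 e2 norm_triangle_ineq[of "(w' \<bullet> y) *\<^sub>R w" "(w \<bullet> y) *\<^sub>R w'"] by simp
      hence "norm ((2 / p\<^sup>2) *\<^sub>R ((w' \<bullet> y) *\<^sub>R w + (w \<bullet> y) *\<^sub>R w')) \<le> (2 / p\<^sup>2) * (4 * V * norm y * p)"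
        using p0 by (simp only: norm_scaleR abs_of_pos[OF divide_pos_pos[OF zero_less_numeral zero_less_power[OF p0]]]) (rule mult_left_mono, simp_all)
      also have "\<dots> = 8 / p * V * norm y" using p0 by (simp add: field_simps power2_eq_square)
      finally show ?thesis .
    qed
    have t5: "norm ((- (2 * q') / (p\<^sup>2)\<^sup>2) *\<^sub>R ((w \<bullet> y) *\<^sub>R w)) \<le> 8 / p * V * norm y"
    proof -
      have "norm ((w \<bullet> y) *\<^sub>R w) \<le> norm y * p\<^sup>2"
        using sc_le[OF wp wp, of y]
        by (simp add: mult_ac power2_eq_square)
      moreover have "\<bar>- (2 * q') / (p\<^sup>2)\<^sup>2\<bar> \<le> 8 * p * V / (p\<^sup>2)\<^sup>2"
        using q'b p0 by (simp add: abs_mult) (rule divide_right_mono, linarith, simp)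
      ultimately have "norm ((- (2 * q') / (p\<^sup>2)\<^sup>2) *\<^sub>R ((w \<bullet> y) *\<^sub>R w)) \<le> 8 * p * V / (p\<^sup>2)\<^sup>2 * (norm y * p\<^sup>2)"
        by (simp only: norm_scaleR[of "- (2 * q') / (p\<^sup>2)\<^sup>2"]) (rule mult_mono, assumption, assumption, use V0 p0 in simp, simp)
      also have "\<dots> = 8 / p * V * norm y" using p0 by (simp add: field_simps power2_eq_square)
      finally show ?thesis .
    qed
    have eq: "(6 * V + 16 / p * V) * norm y = 2 * V * norm y + 2 * V * norm y + 2 * V * norm y + 8 / p * V * norm y + 8 / p * V * norm y"
      by (simp add: algebra_simps)
    show ?thesis unfolding Dv eq
      by (rule order_trans[OF norm5]) (use t1 t2 t3 t4 t5 in linarith)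
  qed
  hence "mat_norm (Dx x1 x2 v1 v2) \<le> 6 * V + 16 / p * V" unfolding mat_norm_def by (rule onorm_le)
  also have "\<dots> \<le> 16 * V + 16 / p * V" using V0 by simp
  finally show ?thesis unfolding p_def .
qed



theorem lemma4p2:
  fixes N :: nat and a b Vmax :: real
    and x v :: "nat \<Rightarrow> real \<Rightarrow> real^3"
  assumes "a < b"
    and "Vmax \<ge> 0"
    and dx: "\<And>i t. i \<in> {1..N} \<Longrightarrow> t \<in> {a<..<b} \<Longrightarrow>
               (x i has_vector_derivative v i t) (at t)"
    and dv: "\<And>i t. i \<in> {1..N} \<Longrightarrow> t \<in> {a<..<b} \<Longrightarrow>
               (\<lambda>s. v i s) differentiable (at t)"
    and unit: "\<And>i t. i \<in> {1..N} \<Longrightarrow> t \<in> {a<..<b} \<Longrightarrow> norm (x i t) = 1"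
    and tang: "\<And>i t. i \<in> {1..N} \<Longrightarrow> t \<in> {a<..<b} \<Longrightarrow> v i t \<bullet> x i t = 0"
    and vbd: "\<And>i t. i \<in> {1..N} \<Longrightarrow> t \<in> {a<..<b} \<Longrightarrow> norm (v i t) \<le> Vmax"
    and nanti: "\<And>i j t. i \<in> {1..N} \<Longrightarrow> j \<in> {1..N} \<Longrightarrow> t \<in> {a<..<b} \<Longrightarrow>
               x i t \<noteq> - x j t"
  shows "\<exists>C>0. \<forall>t\<in>{a<..<b}. \<forall>i\<in>{1..N}. \<forall>j\<in>{1..N}.
           \<exists>D. ((\<lambda>s. Rot (x j s) (x i s)) has_vector_derivative D) (at t) \<and>
               mat_norm D \<le> C * Vmax + C / norm (x i t + x j t) * Vmax"
proof (rule exI[of _ 16], intro conjI ballI)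
  fix t i j assume t: "t \<in> {a<..<b}" and i: "i \<in> {1..N}" and j: "j \<in> {1..N}"
  have na: "x j t \<noteq> - x i t" using nanti[OF j i t] .
  have q0: "(x j t + x i t) \<bullet> (x j t + x i t) \<noteq> 0" using na by (auto simp: add_eq_0_iff)
  have H: "((\<lambda>s. Hf (x j s) (x i s)) has_vector_derivative Dx (x j t) (x i t) (v j t) (v i t)) (at t)"
    by (rule Hf_deriv[OF dx[OF j t] dx[OF i t] q0])
  have R: "((\<lambda>s. Rot (x j s) (x i s)) has_vector_derivative Dx (x j t) (x i t) (v j t) (v i t)) (at t)"
  proof (rule has_vector_derivative_transform_within_open[OF H open_greaterThanLessThan t])
    fix s assume s: "s \<in> {a<..<b}"
    show "Hf (x j s) (x i s) = Rot (x j s) (x i s)"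
      using Rot_eq[OF unit[OF j s] unit[OF i s] nanti[OF j i s]] by simp
  qed
  have "mat_norm (Dx (x j t) (x i t) (v j t) (v i t)) \<le> 16 * Vmax + 16 / norm (x j t + x i t) * Vmax"
    by (rule Dx_bound[OF unit[OF j t] unit[OF i t] na vbd[OF j t] vbd[OF i t]])
  hence "mat_norm (Dx (x j t) (x i t) (v j t) (v i t)) \<le> 16 * Vmax + 16 / norm (x i t + x j t) * Vmax"
    by (simp add: add.commute)
  with R show "\<exists>D. ((\<lambda>s. Rot (x j s) (x i s)) has_vector_derivative D) (at t) \<and>
               mat_norm D \<le> 16 * Vmax + 16 / norm (x i t + x j t) * Vmax" by blast
qed simp

end
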